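(* Let $(M,\mathbf g,\nabla)$ be a Riemann–Cartan space with Levi-Civita connection $D$, let $\{\mathbf e_\alpha\}$ be a moving frame with dual coframe $\{\theta^\alpha\}$, and let $\boldsymbol\partial=\theta^\alpha\nabla_{\mathbf e_\alpha}$ be the Dirac operator acting on sections of the Clifford bundle $\mathcal C\ell(M,\mathtt g)$. Then for every smooth scalar function $f$, $$\boldsymbol\partial^2 f=g^{\beta\rho}\nabla_{\mathbf e_\beta}\nabla_{\mathbf e_\rho}f-g^{\beta\rho}\Gamma^{\alpha}_{\beta\rho}\mathbf e_\alpha(f)-\tfrac12 T^{\alpha}_{\beta\rho}\,\theta^\beta\wedge\theta^\rho\,\mathbf e_\alpha(f),$$ and equivalently $$\boldsymbol\partial^2 f=g^{\beta\alpha}\nabla_{\mathbf e_\beta}\nabla_{\mathbf e_\alpha}f-g^{\beta\rho}\mathring\Gamma^{\alpha}_{\beta\rho}\mathbf e_\alpha(f)+T^{\alpha}_{\alpha\beta}\,\mathbf e^\beta(f)-\tfrac12T^{\alpha}_{\rho\sigma}\,\theta^\rho\wedge\theta^\sigma\,\mathbf e_\alpha(f),$$ where $\mathbf e^\beta=g^{\beta\delta}\mathbf e_\delta$.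
   Context: $\mathbf g$ is a smooth nondegenerate metric on $M$, $g^{\alpha\beta}=\theta^\alpha\cdot\theta^\beta$. A Riemann–Cartan space is a triple $(M,\mathbf g,\nabla)$ with $\nabla$ a linear connection, $\nabla\mathbf g=0$, and nonzero torsion; $\nabla$ acts on forms (as sections of the Clifford bundle of differential forms, where $uv=u\cdot v+u\wedge v$ for $1$-forms) as a derivation, and on functions by $\nabla_{\mathbf e_\alpha}f=\mathbf e_\alpha(f)$. Notation: $[\mathbf e_\beta,\mathbf e_\rho]=c^\alpha_{\beta\rho}\mathbf e_\alpha$, $\nabla_{\mathbf e_\beta}\theta^\alpha=-\Gamma^\alpha_{\beta\rho}\theta^\rho$, $D_{\mathbf e_\beta}\theta^\alpha=-\mathring\Gamma^\alpha_{\beta\rho}\theta^\rho$, torsion components $T^\alpha_{\beta\rho}=\Gamma^\alpha_{\beta\rho}-\Gamma^\alpha_{\rho\beta}-c^\alpha_{\beta\rho}$. $\boldsymbol\partial^2f$ means $\theta^\beta\nabla_{\mathbf e_\beta}(\theta^\rho\nabla_{\mathbf e_\rho}f)$ with Clifford products. *)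

theory Defs
  imports Complex_Main "HOL-Library.Function_Algebras" "HOL-Library.Product_Plus"
begin

text \<open>
  Local (moving-frame) model of a Riemann--Cartan space.
  'm : points of M;  'i : finite frame index set.
  Scalar fields are functions 'm => real (pointwise ring operations);
  the algebra of smooth functions is an abstract set C of such functions.
  E a : the frame vector field e_a, acting on smooth functions.
  gi a b : inverse metric components g^{ab} = theta^a . theta^b.
  Gam a b r : connection coefficients Gamma^a_{br}, i.e.
      nabla_{e_b} theta^a = - sum_r Gamma^a_{br} theta^r.
  c a b r : structure functions, [e_b, e_r] = sum_a c^a_{br} e_a.
  A 1-form sum_a u_a theta^a is represented by its components u :: 'i => 'm => real.
  A section of the grade 0 + grade 2 part of the Clifford bundle is a pair
  (s, B) representing  s + (1/2) sum_{a,b} B a b theta^a /\ theta^b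
  with B antisymmetric.
\<close>

definition const_fn :: "real \<Rightarrow> 'm \<Rightarrow> real" where
  "const_fn r = (\<lambda>_. r)"

definition smooth_algebra :: "('m \<Rightarrow> real) set \<Rightarrow> bool" where
  "smooth_algebra C \<longleftrightarrow> (\<forall>r. const_fn r \<in> C) \<and>
     (\<forall>f\<in>C. \<forall>h\<in>C. f + h \<in> C \<and> f * h \<in> C \<and> - f \<in> C)"

definition frame_derivations ::
  "('m \<Rightarrow> real) set \<Rightarrow> ('i \<Rightarrow> ('m \<Rightarrow> real) \<Rightarrow> ('m \<Rightarrow> real)) \<Rightarrow> bool" where
  "frame_derivations C E \<longleftrightarrow> (\<forall>a. \<forall>f\<in>C. \<forall>h\<in>C. \<forall>r.
      E a f \<in> C \<and> E a (f + h) = E a f + E a h \<and>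
      E a (const_fn r * f) = const_fn r * E a f \<and>
      E a (f * h) = E a f * h + f * E a h)"

definition frame_brackets ::
  "('m \<Rightarrow> real) set \<Rightarrow> ('i \<Rightarrow> ('m \<Rightarrow> real) \<Rightarrow> ('m \<Rightarrow> real)) \<Rightarrow>
   ('i \<Rightarrow> 'i \<Rightarrow> 'i \<Rightarrow> 'm \<Rightarrow> real) \<Rightarrow> bool" where
  "frame_brackets C E c \<longleftrightarrow> (\<forall>b r. \<forall>f\<in>C.
      E b (E r f) - E r (E b f) = (\<Sum>a\<in>UNIV. c a b r * E a f))"

definition nondeg_metric ::
  "('m \<Rightarrow> real) set \<Rightarrow> ('i::finite \<Rightarrow> 'i \<Rightarrow> 'm \<Rightarrow> real) \<Rightarrow> bool" where
  "nondeg_metric C gi \<longleftrightarrow> (\<forall>a b. gi a b \<in> C \<and> gi a b = gi b a) \<and>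
     (\<exists>gl. \<forall>x a b. (\<Sum>s\<in>UNIV. gi a s x * gl s b x) = (if a = b then 1 else 0))"

definition torsion ::
  "('i \<Rightarrow> 'i \<Rightarrow> 'i \<Rightarrow> 'm \<Rightarrow> real) \<Rightarrow> ('i \<Rightarrow> 'i \<Rightarrow> 'i \<Rightarrow> 'm \<Rightarrow> real) \<Rightarrow>
   'i \<Rightarrow> 'i \<Rightarrow> 'i \<Rightarrow> 'm \<Rightarrow> real" where
  "torsion Gam c a b r = Gam a b r - Gam a r b - c a b r"

text \<open>nabla g = 0, written for g^{ar} = theta^a . theta^r:
  e_b(g^{ar}) = - Gamma^a_{bs} g^{sr} - Gamma^r_{bs} g^{as}.\<close>
definition metric_compatible ::
  "('i \<Rightarrow> ('m \<Rightarrow> real) \<Rightarrow> ('m \<Rightarrow> real)) \<Rightarrow> ('i::finite \<Rightarrow> 'i \<Rightarrow> 'm \<Rightarrow> real) \<Rightarrow>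
   ('i \<Rightarrow> 'i \<Rightarrow> 'i \<Rightarrow> 'm \<Rightarrow> real) \<Rightarrow> bool" where
  "metric_compatible E gi Gam \<longleftrightarrow> (\<forall>a b r.
      E b (gi a r) = - (\<Sum>s\<in>UNIV. Gam a b s * gi s r + Gam r b s * gi a s))"

definition riemann_cartan ::
  "('m \<Rightarrow> real) set \<Rightarrow> ('i::finite \<Rightarrow> ('m \<Rightarrow> real) \<Rightarrow> ('m \<Rightarrow> real)) \<Rightarrow>
   ('i \<Rightarrow> 'i \<Rightarrow> 'i \<Rightarrow> 'm \<Rightarrow> real) \<Rightarrow> ('i \<Rightarrow> 'i \<Rightarrow> 'm \<Rightarrow> real) \<Rightarrow>
   ('i \<Rightarrow> 'i \<Rightarrow> 'i \<Rightarrow> 'm \<Rightarrow> real) \<Rightarrow> bool" where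
  "riemann_cartan C E c gi Gam \<longleftrightarrow>
     smooth_algebra C \<and> frame_derivations C E \<and>
     (\<forall>a b r. c a b r \<in> C) \<and> frame_brackets C E c \<and>
     nondeg_metric C gi \<and>
     (\<forall>a b r. Gam a b r \<in> C) \<and> metric_compatible E gi Gam \<and>
     (\<exists>a b r. torsion Gam c a b r \<noteq> 0)"

definition levi_civita ::
  "('m \<Rightarrow> real) set \<Rightarrow> ('i::finite \<Rightarrow> ('m \<Rightarrow> real) \<Rightarrow> ('m \<Rightarrow> real)) \<Rightarrow>
   ('i \<Rightarrow> 'i \<Rightarrow> 'i \<Rightarrow> 'm \<Rightarrow> real) \<Rightarrow> ('i \<Rightarrow> 'i \<Rightarrow> 'm \<Rightarrow> real) \<Rightarrow>
   ('i \<Rightarrow> 'i \<Rightarrow> 'i \<Rightarrow> 'm \<Rightarrow> real) \<Rightarrow> bool" where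
  "levi_civita C E c gi LC \<longleftrightarrow> (\<forall>a b r. LC a b r \<in> C) \<and>
     metric_compatible E gi LC \<and> (\<forall>a b r. torsion LC c a b r = 0)"

definition theta :: "'i \<Rightarrow> 'i \<Rightarrow> 'm \<Rightarrow> real" where
  "theta b = (\<lambda>a. if a = b then 1 else 0)"

definition scal :: "('m \<Rightarrow> real) \<Rightarrow> ('m \<Rightarrow> real) \<times> ('i \<Rightarrow> 'i \<Rightarrow> 'm \<Rightarrow> real)" where
  "scal s = (s, 0)"

text \<open>u /\ v = sum_{a,b} u_a v_b theta^a/\theta^b = (1/2) sum (u_a v_b - u_b v_a) theta^a/\theta^b\<close>
definition wedge1 :: "('i \<Rightarrow> 'm \<Rightarrow> real) \<Rightarrow> ('i \<Rightarrow> 'm \<Rightarrow> real) \<Rightarrow>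
    ('m \<Rightarrow> real) \<times> ('i \<Rightarrow> 'i \<Rightarrow> 'm \<Rightarrow> real)" where
  "wedge1 u v = (0, \<lambda>a b. u a * v b - u b * v a)"

definition fscale :: "('m \<Rightarrow> real) \<Rightarrow> ('m \<Rightarrow> real) \<times> ('i \<Rightarrow> 'i \<Rightarrow> 'm \<Rightarrow> real) \<Rightarrow>
    ('m \<Rightarrow> real) \<times> ('i \<Rightarrow> 'i \<Rightarrow> 'm \<Rightarrow> real)" where
  "fscale h X = (h * fst X, \<lambda>a b. h * snd X a b)"

text \<open>Clifford product of 1-forms: uv = u.v + u/\v, with u.v = g^{ab} u_a v_b.\<close>
definition clif1 :: "('i::finite \<Rightarrow> 'i \<Rightarrow> 'm \<Rightarrow> real) \<Rightarrow> ('i \<Rightarrow> 'm \<Rightarrow> real) \<Rightarrow>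
    ('i \<Rightarrow> 'm \<Rightarrow> real) \<Rightarrow> ('m \<Rightarrow> real) \<times> ('i \<Rightarrow> 'i \<Rightarrow> 'm \<Rightarrow> real)" where
  "clif1 gi u v = scal (\<Sum>a\<in>UNIV. \<Sum>b\<in>UNIV. gi a b * u a * v b) + wedge1 u v"

text \<open>nabla_{e_b} on a 1-form u = sum_r u_r theta^r (derivation, nabla theta^r = -Gamma^r_{bs} theta^s).\<close>
definition nabla1 :: "('i::finite \<Rightarrow> ('m \<Rightarrow> real) \<Rightarrow> ('m \<Rightarrow> real)) \<Rightarrow>
    ('i \<Rightarrow> 'i \<Rightarrow> 'i \<Rightarrow> 'm \<Rightarrow> real) \<Rightarrow> 'i \<Rightarrow> ('i \<Rightarrow> 'm \<Rightarrow> real) \<Rightarrow> ('i \<Rightarrow> 'm \<Rightarrow> real)" where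
  "nabla1 E Gam b u = (\<lambda>s. E b (u s) - (\<Sum>r\<in>UNIV. u r * Gam r b s))"

text \<open>Dirac operator theta^b nabla_{e_b} on scalars (gives a 1-form) and on 1-forms.\<close>
definition dirac0 :: "('i \<Rightarrow> ('m \<Rightarrow> real) \<Rightarrow> ('m \<Rightarrow> real)) \<Rightarrow> ('m \<Rightarrow> real) \<Rightarrow> 'i \<Rightarrow> 'm \<Rightarrow> real" where
  "dirac0 E f = (\<lambda>r. E r f)"

definition dirac1 :: "('i::finite \<Rightarrow> 'i \<Rightarrow> 'm \<Rightarrow> real) \<Rightarrow> ('i \<Rightarrow> ('m \<Rightarrow> real) \<Rightarrow> ('m \<Rightarrow> real)) \<Rightarrow>
    ('i \<Rightarrow> 'i \<Rightarrow> 'i \<Rightarrow> 'm \<Rightarrow> real) \<Rightarrow> ('i \<Rightarrow> 'm \<Rightarrow> real) \<Rightarrow>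
    ('m \<Rightarrow> real) \<times> ('i \<Rightarrow> 'i \<Rightarrow> 'm \<Rightarrow> real)" where
  "dirac1 gi E Gam u = (\<Sum>b\<in>UNIV. clif1 gi (theta b) (nabla1 E Gam b u))"

end

theory Submission
  imports Defs
begin


lemma sum_fun_app: "(sum f A) x = (\<Sum>a\<in>A. f a x)"
  by (induction A rule: infinite_finite_induct) auto

lemma theta_app: "theta b a x = (if a = b then 1 else 0)"
  by (simp add: theta_def)

lemma ifm1: "(y::real) * (if P then 1 else 0) = (if P then y else 0)" by simp
lemma ifm2: "(if P then 1 else 0) * (y::real) = (if P then y else 0)" by simp

lemma ifm3: "(if P then (y::real) else 0) * z = (if P then y * z else 0)" by simp
lemma sum_ifP: "(\<Sum>x\<in>A. if P then f x else (0::real)) = (if P then sum f A else 0)" by simp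

lemma fst_dirac1:
  "fst (dirac1 gi E Gam u) x = (\<Sum>b\<in>UNIV. \<Sum>c\<in>UNIV. gi b c x * (E b (u c) x - (\<Sum>r\<in>UNIV. u r x * Gam r b c x)))"
  unfolding dirac1_def clif1_def nabla1_def
  by (simp add: fst_sum sum_fun_app scal_def wedge1_def theta_app ifm1 ifm2 ifm3 sum_ifP cong: if_cong)

lemma snd_dirac1:
  "snd (dirac1 gi E Gam u) a d x = (E a (u d) x - (\<Sum>r\<in>UNIV. u r x * Gam r a d x))
      - (E d (u a) x - (\<Sum>r\<in>UNIV. u r x * Gam r d a x))"
  unfolding dirac1_def clif1_def nabla1_def
  by (simp add: snd_sum sum_fun_app scal_def wedge1_def theta_app ifm1 ifm2 ifm3 sum_ifP sum_subtractf cong: if_cong)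

lemma fst_fscale_wedge: "fst (fscale h (wedge1 u v)) = 0"
  by (simp add: fscale_def wedge1_def)
lemma snd_fscale_wedge_theta: "snd (fscale h (wedge1 (theta b) (theta r))) p q x =
   h x * ((if p = b then 1 else 0) * (if q = r then 1 else 0) - (if q = b then 1 else 0) * (if p = r then 1 else 0))"
  by (simp add: fscale_def wedge1_def theta_app)




lemma gl_sym:
  fixes g gl :: "'i::finite \<Rightarrow> 'i \<Rightarrow> real"
  assumes gs: "\<And>a b. g a b = g b a"
    and inv: "\<And>a b. (\<Sum>s\<in>UNIV. g a s * gl s b) = (if a = b then 1 else 0)"
  shows "gl a t = gl t a"
proof -
  have linv: "(\<Sum>s\<in>UNIV. gl s a * g s u) = (if a = u then 1 else 0)" for a u
    using inv[of u a] by (simp add: gs mult.commute eq_commute)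
  have "(\<Sum>u\<in>UNIV. \<Sum>s\<in>UNIV. gl s a * g s u * gl u t) = (\<Sum>u\<in>UNIV. (if a = u then 1 else 0) * gl u t)"
    by (simp add: sum_distrib_right[symmetric] linv)
  also have "\<dots> = gl a t" by (simp add: ifm2)
  finally have 1: "(\<Sum>u\<in>UNIV. \<Sum>s\<in>UNIV. gl s a * g s u * gl u t) = gl a t" .
  have "(\<Sum>u\<in>UNIV. \<Sum>s\<in>UNIV. gl s a * g s u * gl u t) = (\<Sum>s\<in>UNIV. gl s a * (\<Sum>u\<in>UNIV. g s u * gl u t))"
    by (subst sum.swap) (simp add: sum_distrib_left mult.assoc)
  also have "\<dots> = gl t a" by (simp add: inv if_distrib cong: if_cong)
  finally show ?thesis using 1 by simp
qed

lemma contorsion_trace: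
  fixes g gl :: "'i::finite \<Rightarrow> 'i \<Rightarrow> real" and K :: "'i \<Rightarrow> 'i \<Rightarrow> 'i \<Rightarrow> real"
  assumes gs: "\<And>a b. g a b = g b a"
    and inv: "\<And>a b. (\<Sum>s\<in>UNIV. g a s * gl s b) = (if a = b then 1 else 0)"
    and mc: "\<And>a b r. (\<Sum>s\<in>UNIV. K a b s * g s r + K r b s * g a s) = 0"
  shows "(\<Sum>a\<in>UNIV. K a b a) = 0"
proof -
  define M where "M a t = (\<Sum>s\<in>UNIV. K a b s * g s t)" for a t
  have Ma: "M a t = - M t a" for a t
    using mc[of a b t] unfolding M_def by (simp add: sum.distrib gs mult.commute eq_neg_iff_add_eq_0)
  have "(\<Sum>a\<in>UNIV. K a b a) = (\<Sum>a\<in>UNIV. \<Sum>s\<in>UNIV. K a b s * (if s = a then 1 else 0))"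
    by (simp add: ifm1)
  also have "\<dots> = (\<Sum>a\<in>UNIV. \<Sum>s\<in>UNIV. K a b s * (\<Sum>t\<in>UNIV. g s t * gl t a))"
    by (simp add: inv)
  also have "\<dots> = (\<Sum>a\<in>UNIV. \<Sum>t\<in>UNIV. M a t * gl t a)"
    unfolding M_def
    apply (rule sum.cong[OF refl])
    apply (simp only: sum_distrib_left sum_distrib_right mult.assoc)
    by (rule sum.swap)
  finally have S: "(\<Sum>a\<in>UNIV. K a b a) = (\<Sum>a\<in>UNIV. \<Sum>t\<in>UNIV. M a t * gl t a)" .
  have "(\<Sum>a\<in>UNIV. \<Sum>t\<in>UNIV. M a t * gl t a) = (\<Sum>t\<in>UNIV. \<Sum>a\<in>UNIV. M a t * gl t a)"
    by (rule sum.swap)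
  also have "\<dots> = (\<Sum>t\<in>UNIV. \<Sum>a\<in>UNIV. - (M t a * gl a t))"
  proof -
    have e: "M a t * gl t a = - (M t a * gl a t)" for a t
      using Ma[of a t] gl_sym[OF gs inv, of a t] by simp
    show ?thesis by (intro sum.cong refl e)
  qed
  also have "\<dots> = - (\<Sum>a\<in>UNIV. \<Sum>t\<in>UNIV. M a t * gl t a)"
    by (simp add: sum_negf)
  finally show ?thesis using S by simp
qed

lemma swap3: "(\<Sum>b\<in>B. \<Sum>r\<in>R. \<Sum>a\<in>A. X b r a) = (\<Sum>a\<in>A. \<Sum>b\<in>B. \<Sum>r\<in>R. (X b r a :: real))"
proof -
  have "(\<Sum>b\<in>B. \<Sum>r\<in>R. \<Sum>a\<in>A. X b r a) = (\<Sum>b\<in>B. \<Sum>a\<in>A. \<Sum>r\<in>R. X b r a)"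
    by (intro sum.cong refl sum.swap)
  also have "\<dots> = (\<Sum>a\<in>A. \<Sum>b\<in>B. \<Sum>r\<in>R. X b r a)" by (rule sum.swap)
  finally show ?thesis .
qed

lemma scalar2:
  fixes g gl :: "'i::finite \<Rightarrow> 'i \<Rightarrow> real" and K :: "'i \<Rightarrow> 'i \<Rightarrow> 'i \<Rightarrow> real" and e :: "'i \<Rightarrow> real"
  assumes gs: "\<And>a b. g a b = g b a"
    and inv: "\<And>a b. (\<Sum>s\<in>UNIV. g a s * gl s b) = (if a = b then 1 else 0)"
    and mc: "\<And>a b r. (\<Sum>s\<in>UNIV. K a b s * g s r + K r b s * g a s) = 0"
  shows "(\<Sum>b\<in>UNIV. \<Sum>r\<in>UNIV. \<Sum>a\<in>UNIV. g b r * K a b r * e a)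
     = - (\<Sum>a\<in>UNIV. \<Sum>b\<in>UNIV. (K a a b - K a b a) * (\<Sum>d\<in>UNIV. g b d * e d))"
proof -
  have L: "(\<Sum>b\<in>UNIV. \<Sum>r\<in>UNIV. \<Sum>a\<in>UNIV. g b r * K a b r * e a)
      = (\<Sum>d\<in>UNIV. e d * (\<Sum>a\<in>UNIV. \<Sum>s\<in>UNIV. g a s * K d a s))"
    by (subst swap3) (simp add: sum_distrib_left mult.commute mult.left_commute)
  have mc': "(\<Sum>b\<in>UNIV. K a a b * g b d) = - (\<Sum>s\<in>UNIV. g a s * K d a s)" for a d
    using mc[of a a d] by (simp add: sum.distrib mult.commute eq_neg_iff_add_eq_0)
  have F: "(\<Sum>a\<in>UNIV. \<Sum>b\<in>UNIV. K a a b * (\<Sum>d\<in>UNIV. g b d * e d))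
      = (\<Sum>d\<in>UNIV. e d * (\<Sum>a\<in>UNIV. \<Sum>b\<in>UNIV. K a a b * g b d))"
    using swap3[of "\<lambda>a b d. K a a b * g b d * e d" UNIV UNIV UNIV]
    by (simp add: sum_distrib_left mult.commute mult.left_commute)
  have Z: "(\<Sum>a\<in>UNIV. \<Sum>b\<in>UNIV. K a b a * (\<Sum>d\<in>UNIV. g b d * e d)) = 0"
  proof -
    have T: "(\<Sum>a\<in>UNIV. K a b a) = 0" for b by (rule contorsion_trace[OF gs inv mc])
    show ?thesis by (subst sum.swap) (simp add: sum_distrib_right[symmetric] T)
  qed
  have "(\<Sum>a\<in>UNIV. \<Sum>b\<in>UNIV. (K a a b - K a b a) * (\<Sum>d\<in>UNIV. g b d * e d))
     = (\<Sum>a\<in>UNIV. \<Sum>b\<in>UNIV. K a a b * (\<Sum>d\<in>UNIV. g b d * e d))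
      - (\<Sum>a\<in>UNIV. \<Sum>b\<in>UNIV. K a b a * (\<Sum>d\<in>UNIV. g b d * e d))"
    by (simp add: left_diff_distrib sum_subtractf)
  also have "\<dots> = (\<Sum>d\<in>UNIV. e d * (\<Sum>a\<in>UNIV. - (\<Sum>s\<in>UNIV. g a s * K d a s)))"
    using F Z mc' by simp
  finally show ?thesis using L by (simp add: sum_negf)
qed


lemma ifm4: "(y::real) * (if P then if Q then 1 else 0 else 0) = (if P then if Q then y else 0 else 0)" by simp

lemma dl: "(\<Sum>r\<in>(UNIV::'i::finite set). if q = r then F r else (0::real)) = F q" by simp

lemma dd: "(\<Sum>b\<in>(UNIV::'i::finite set). \<Sum>r\<in>UNIV. (F b r::real) * ((if p = b then 1 else 0) * (if q = r then 1 else 0) - (if q = b then 1 else 0) * (if p = r then 1 else 0))) = F p q - F q p"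
proof -
  have "(\<Sum>r\<in>UNIV. (F b r::real) * ((if p = b then 1 else 0) * (if q = r then 1 else 0) - (if q = b then 1 else 0) * (if p = r then 1 else 0)))
     = (if p = b then F b q else 0) - (if q = b then F b p else 0)" for b
    by (simp add: right_diff_distrib sum_subtractf ifm1)
  then show ?thesis by (simp add: sum_subtractf)
qed

lemma fst_tri: "fst (\<Sum>a\<in>UNIV. \<Sum>b\<in>UNIV. \<Sum>r\<in>UNIV. fscale (H a b r) (wedge1 (theta b) (theta r))) = 0"
  by (simp add: fst_sum fst_fscale_wedge)

lemma snd_tri: fixes H :: "'i::finite \<Rightarrow> 'i \<Rightarrow> 'i \<Rightarrow> 'm \<Rightarrow> real" shows "snd (\<Sum>a\<in>(UNIV::'i::finite set). \<Sum>b\<in>UNIV. \<Sum>r\<in>UNIV. fscale (H a b r) (wedge1 (theta b) (theta r))) p q x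
   = (\<Sum>a\<in>UNIV. H a p q x - H a q p x)"
proof -
  have e: "(\<Sum>b\<in>UNIV. \<Sum>r\<in>UNIV. H a b r x * ((if p = b then 1 else 0) * (if q = r then 1 else 0) - (if q = b then 1 else 0) * (if p = r then 1 else 0)))
     = H a p q x - H a q p x" for a
    by (rule dd)
  show ?thesis
    by (simp add: snd_sum sum_fun_app snd_fscale_wedge_theta e)
qed

theorem mainTheorem3:
  fixes C :: "('m \<Rightarrow> real) set"
    and E :: "'i::finite \<Rightarrow> ('m \<Rightarrow> real) \<Rightarrow> ('m \<Rightarrow> real)"
    and c Gam LC :: "'i \<Rightarrow> 'i \<Rightarrow> 'i \<Rightarrow> 'm \<Rightarrow> real"
    and gi :: "'i \<Rightarrow> 'i \<Rightarrow> 'm \<Rightarrow> real"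
    and f :: "'m \<Rightarrow> real"
  assumes RC: "riemann_cartan C E c gi Gam"
    and LC: "levi_civita C E c gi LC"
    and f: "f \<in> C"
  shows "(dirac1 gi E Gam (dirac0 E f) =
           scal (\<Sum>b\<in>UNIV. \<Sum>r\<in>UNIV. gi b r * E b (E r f))
         - scal (\<Sum>b\<in>UNIV. \<Sum>r\<in>UNIV. \<Sum>a\<in>UNIV. gi b r * Gam a b r * E a f)
         - (\<Sum>a\<in>UNIV. \<Sum>b\<in>UNIV. \<Sum>r\<in>UNIV.
              fscale (const_fn (1/2) * torsion Gam c a b r * E a f) (wedge1 (theta b) (theta r))))
    \<and> (dirac1 gi E Gam (dirac0 E f) =
           scal (\<Sum>b\<in>UNIV. \<Sum>a\<in>UNIV. gi b a * E b (E a f))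
         - scal (\<Sum>b\<in>UNIV. \<Sum>r\<in>UNIV. \<Sum>a\<in>UNIV. gi b r * LC a b r * E a f)
         + scal (\<Sum>a\<in>UNIV. \<Sum>b\<in>UNIV. torsion Gam c a a b * (\<Sum>d\<in>UNIV. gi b d * E d f))
         - (\<Sum>a\<in>UNIV. \<Sum>r\<in>UNIV. \<Sum>s\<in>UNIV.
              fscale (const_fn (1/2) * torsion Gam c a r s * E a f) (wedge1 (theta r) (theta s))))"
  proof -
  from RC have FB: "frame_brackets C E c" and ND: "nondeg_metric C gi"
    and MG: "metric_compatible E gi Gam"
    unfolding riemann_cartan_def by auto
  from LC have MLc: "metric_compatible E gi LC" and TL: "\<And>a b r. torsion LC c a b r = 0"
    unfolding levi_civita_def by auto
  from ND obtain gl where gs: "\<And>a b. gi a b = gi b a"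
      and inv: "\<And>x a b. (\<Sum>s\<in>UNIV. gi a s x * gl s b x) = (if a = b then 1 else 0)"
    unfolding nondeg_metric_def by blast
  have br: "E p (E q f) x - E q (E p f) x = (\<Sum>a\<in>UNIV. c a p q x * E a f x)" for p q x
  proof -
    have "E p (E q f) - E q (E p f) = (\<Sum>a\<in>UNIV. c a p q * E a f)"
      using FB f unfolding frame_brackets_def by blast
    from fun_cong[OF this, of x] show ?thesis by (simp add: sum_fun_app)
  qed
  define K where "K x a b r = Gam a b r x - LC a b r x" for x a b r
  have mcK: "(\<Sum>s\<in>UNIV. K x a b s * gi s r x + K x r b s * gi a s x) = 0" for x a b r
  proof -
    have "E b (gi a r) x = E b (gi a r) x" by simp
    have 1: "E b (gi a r) x = - (\<Sum>s\<in>UNIV. Gam a b s x * gi s r x + Gam r b s x * gi a s x)"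
      using fun_cong[OF MG[unfolded metric_compatible_def, rule_format, of b a r], of x]
      by (simp add: sum_fun_app)
    have 2: "E b (gi a r) x = - (\<Sum>s\<in>UNIV. LC a b s x * gi s r x + LC r b s x * gi a s x)"
      using fun_cong[OF MLc[unfolded metric_compatible_def, rule_format, of b a r], of x]
      by (simp add: sum_fun_app)
    from 1 2 show ?thesis unfolding K_def
      by (simp add: left_diff_distrib sum_subtractf sum.distrib algebra_simps)
  qed
  have TK: "torsion Gam c a b r x = K x a b r - K x a r b" for x a b r
    using fun_cong[OF TL[of a b r], of x] unfolding K_def torsion_def by simp
  have Tanti: "(\<Sum>a\<in>UNIV. torsion Gam c a q p x * E a f x) = - (\<Sum>a\<in>UNIV. torsion Gam c a p q x * E a f x)" for p q x
  proof -
    have "(\<Sum>a\<in>UNIV. c a q p x * E a f x) = - (\<Sum>a\<in>UNIV. c a p q x * E a f x)"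
      using br[of p q x] br[of q p x] by simp
    then show ?thesis unfolding torsion_def
      by (simp add: left_diff_distrib sum_subtractf sum.distrib algebra_simps)
  qed
  have bivec: "snd (dirac1 gi E Gam (dirac0 E f)) p q x = - (\<Sum>a\<in>UNIV. torsion Gam c a p q x * E a f x)" for p q x
    using br[of p q x] unfolding snd_dirac1 dirac0_def torsion_def
    by (simp add: left_diff_distrib right_diff_distrib sum_subtractf sum.distrib algebra_simps)
  have scal1: "fst (dirac1 gi E Gam (dirac0 E f)) x =
     (\<Sum>b\<in>UNIV. \<Sum>r\<in>UNIV. gi b r x * E b (E r f) x) - (\<Sum>b\<in>UNIV. \<Sum>r\<in>UNIV. \<Sum>a\<in>UNIV. gi b r x * Gam a b r x * E a f x)" for x
    unfolding fst_dirac1 dirac0_def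
    by (simp add: right_diff_distrib sum_subtractf sum_distrib_left algebra_simps)
  have S2: "(\<Sum>b\<in>UNIV. \<Sum>r\<in>UNIV. \<Sum>a\<in>UNIV. gi b r x * K x a b r * E a f x)
     = - (\<Sum>a\<in>UNIV. \<Sum>b\<in>UNIV. (K x a a b - K x a b a) * (\<Sum>d\<in>UNIV. gi b d x * E d f x))" for x
    by (rule scalar2[where gl = "\<lambda>a b. gl a b x"]) (use gs inv mcK in auto)
  have rhsb: "snd (\<Sum>a\<in>UNIV. \<Sum>b\<in>UNIV. \<Sum>r\<in>UNIV.
              fscale (const_fn (1/2) * torsion Gam c a b r * E a f) (wedge1 (theta b) (theta r))) p q x
      = (\<Sum>a\<in>UNIV. torsion Gam c a p q x * E a f x)" for p q x
  proof -
    have "snd (\<Sum>a\<in>UNIV. \<Sum>b\<in>UNIV. \<Sum>r\<in>UNIV.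
              fscale (const_fn (1/2) * torsion Gam c a b r * E a f) (wedge1 (theta b) (theta r))) p q x
       = (\<Sum>a\<in>UNIV. 1/2 * torsion Gam c a p q x * E a f x - 1/2 * torsion Gam c a q p x * E a f x)"
      by (simp add: snd_tri const_fn_def)
    also have "\<dots> = 1/2 * (\<Sum>a\<in>UNIV. torsion Gam c a p q x * E a f x) - 1/2 * (\<Sum>a\<in>UNIV. torsion Gam c a q p x * E a f x)"
      by (simp add: sum_subtractf sum_distrib_left mult.assoc)
    also have "\<dots> = (\<Sum>a\<in>UNIV. torsion Gam c a p q x * E a f x)" using Tanti[of q p x] by simp
    finally show ?thesis .
  qed
  show ?thesis
  proof (intro conjI prod_eqI ext)
    fix x
    show "fst (dirac1 gi E Gam (dirac0 E f)) x = fst (scal (\<Sum>b\<in>UNIV. \<Sum>r\<in>UNIV. gi b r * E b (E r f))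
         - scal (\<Sum>b\<in>UNIV. \<Sum>r\<in>UNIV. \<Sum>a\<in>UNIV. gi b r * Gam a b r * E a f)
         - (\<Sum>a\<in>UNIV. \<Sum>b\<in>UNIV. \<Sum>r\<in>UNIV.
              fscale (const_fn (1/2) * torsion Gam c a b r * E a f) (wedge1 (theta b) (theta r)))) x"
      by (simp add: scal1 scal_def fst_tri sum_fun_app)
  next
    fix p q x
    show "snd (dirac1 gi E Gam (dirac0 E f)) p q x = snd (scal (\<Sum>b\<in>UNIV. \<Sum>r\<in>UNIV. gi b r * E b (E r f))
         - scal (\<Sum>b\<in>UNIV. \<Sum>r\<in>UNIV. \<Sum>a\<in>UNIV. gi b r * Gam a b r * E a f)
         - (\<Sum>a\<in>UNIV. \<Sum>b\<in>UNIV. \<Sum>r\<in>UNIV.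
              fscale (const_fn (1/2) * torsion Gam c a b r * E a f) (wedge1 (theta b) (theta r)))) p q x"
      using rhsb[of p q x] by (simp add: bivec scal_def)
  next
    fix x
    have "(\<Sum>b\<in>UNIV. \<Sum>r\<in>UNIV. \<Sum>a\<in>UNIV. gi b r x * Gam a b r x * E a f x)
       = (\<Sum>b\<in>UNIV. \<Sum>r\<in>UNIV. \<Sum>a\<in>UNIV. gi b r x * LC a b r x * E a f x)
       + (\<Sum>b\<in>UNIV. \<Sum>r\<in>UNIV. \<Sum>a\<in>UNIV. gi b r x * K x a b r * E a f x)"
      unfolding K_def by (simp add: sum.distrib[symmetric] algebra_simps)
    then have e: "(\<Sum>b\<in>UNIV. \<Sum>r\<in>UNIV. \<Sum>a\<in>UNIV. gi b r x * Gam a b r x * E a f x)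
       = (\<Sum>b\<in>UNIV. \<Sum>r\<in>UNIV. \<Sum>a\<in>UNIV. gi b r x * LC a b r x * E a f x)
       - (\<Sum>a\<in>UNIV. \<Sum>b\<in>UNIV. torsion Gam c a a b x * (\<Sum>d\<in>UNIV. gi b d x * E d f x))"
      using S2[of x] by (simp add: TK)
    show "fst (dirac1 gi E Gam (dirac0 E f)) x = fst (scal (\<Sum>b\<in>UNIV. \<Sum>a\<in>UNIV. gi b a * E b (E a f))
         - scal (\<Sum>b\<in>UNIV. \<Sum>r\<in>UNIV. \<Sum>a\<in>UNIV. gi b r * LC a b r * E a f)
         + scal (\<Sum>a\<in>UNIV. \<Sum>b\<in>UNIV. torsion Gam c a a b * (\<Sum>d\<in>UNIV. gi b d * E d f))
         - (\<Sum>a\<in>UNIV. \<Sum>r\<in>UNIV. \<Sum>s\<in>UNIV.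
              fscale (const_fn (1/2) * torsion Gam c a r s * E a f) (wedge1 (theta r) (theta s)))) x"
      by (simp add: scal1 scal_def fst_tri sum_fun_app e)
  next
    fix p q x
    show "snd (dirac1 gi E Gam (dirac0 E f)) p q x = snd (scal (\<Sum>b\<in>UNIV. \<Sum>a\<in>UNIV. gi b a * E b (E a f))
         - scal (\<Sum>b\<in>UNIV. \<Sum>r\<in>UNIV. \<Sum>a\<in>UNIV. gi b r * LC a b r * E a f)
         + scal (\<Sum>a\<in>UNIV. \<Sum>b\<in>UNIV. torsion Gam c a a b * (\<Sum>d\<in>UNIV. gi b d * E d f))
         - (\<Sum>a\<in>UNIV. \<Sum>r\<in>UNIV. \<Sum>s\<in>UNIV.
              fscale (const_fn (1/2) * torsion Gam c a r s * E a f) (wedge1 (theta r) (theta s)))) p q x"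
      using rhsb[of p q x] by (simp add: bivec scal_def)
  qed
qed

end
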